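(* Let $p$ be a prime, $k\ge2$ an integer, $R=\{t^k: t\in\mathbb F_p^*\}$, and $G=\{x\mapsto rx+b: r\in R,\ b\in\mathbb F_p\}\le{\rm AGL}(1,p)$. Then every element of $G\wr S_k$, in the product action on $\mathbb F_p^k$, is an imprimitive permutation of $\mathbb F_p^k$.
   Context: For $H\le{\rm Sym}(\Delta)$ and $K\le S_k$, $H\wr K$ in product action acts on $\Delta^k$ by applying $h_i$ to the $i$-th coordinate and permuting coordinates by $\sigma\in K$. A permutation of a set $\Omega$ of size $n$ is imprimitive if it preserves a partition of $\Omega$ into blocks of equal size $m$ with $1<m<n$. *)

theory Defs
  imports Main "HOL-Computational_Algebra.Primes" "HOL-Library.FuncSet" "HOL-Library.Disjoint_Sets" "HOL-Combinatorics.Permutations"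
begin

text \<open>The field F_p is modelled as {0..<p} with arithmetic mod p.
  The point set F_p^k is the set of extensional functions {0..<k} -> {0..<p}.\<close>

definition Fp :: "nat \<Rightarrow> nat set" where
  "Fp p = {..<p}"

definition space :: "nat \<Rightarrow> nat \<Rightarrow> (nat \<Rightarrow> nat) set" where
  "space p k = PiE {..<k} (\<lambda>_. Fp p)"

definition kth_powers :: "nat \<Rightarrow> nat \<Rightarrow> nat set" where
  "kth_powers p k = {(t ^ k) mod p | t. t \<in> Fp p \<and> t \<noteq> 0}"

text \<open>An element x |-> r x + b of G is encoded by the pair (r, b).\<close>
definition Ggrp :: "nat \<Rightarrow> nat \<Rightarrow> (nat \<times> nat) set" where
  "Ggrp p k = kth_powers p k \<times> Fp p"

definition aff_apply :: "nat \<Rightarrow> nat \<times> nat \<Rightarrow> nat \<Rightarrow> nat" where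
  "aff_apply p g x = (fst g * x + snd g) mod p"

text \<open>Product action of (h_0,...,h_{k-1}; sigma) in G wr S_k: apply h_i to the
  i-th coordinate, then move coordinate i to position sigma(i),
  i.e. y_{sigma i} = h_i(x_i).\<close>
definition wr_action :: "nat \<Rightarrow> nat \<Rightarrow> (nat \<Rightarrow> nat \<times> nat) \<Rightarrow> (nat \<Rightarrow> nat)
    \<Rightarrow> (nat \<Rightarrow> nat) \<Rightarrow> (nat \<Rightarrow> nat)" where
  "wr_action p k h \<sigma> x =
     (\<lambda>j\<in>{..<k}. aff_apply p (h (inv \<sigma> j)) (x (inv \<sigma> j)))"

definition imprimitive :: "'a set \<Rightarrow> ('a \<Rightarrow> 'a) \<Rightarrow> bool" where
  "imprimitive \<Omega> g \<longleftrightarrow>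
     (\<exists>P m. partition_on \<Omega> P \<and> (\<forall>B\<in>P. card B = m) \<and> 1 < m \<and> m < card \<Omega>
            \<and> (\<forall>B\<in>P. g ` B \<in> P))"

end

theory Submission
  imports Defs "HOL-Number_Theory.Cong"
begin


lemma imprim_from_rel:
  fixes \<Omega> :: "'a set" and f :: "'a \<Rightarrow> 'a" and rel :: "'a \<Rightarrow> 'a \<Rightarrow> bool"
  assumes fin: "finite \<Omega>" and inj: "inj_on f \<Omega>" and into: "f ` \<Omega> \<subseteq> \<Omega>"
    and refl: "\<And>x. x \<in> \<Omega> \<Longrightarrow> rel x x"
    and sym: "\<And>x y. x \<in> \<Omega> \<Longrightarrow> y \<in> \<Omega> \<Longrightarrow> rel x y \<Longrightarrow> rel y x"
    and trans: "\<And>x y z. x \<in> \<Omega> \<Longrightarrow> y \<in> \<Omega> \<Longrightarrow> z \<in> \<Omega> \<Longrightarrow> rel x y \<Longrightarrow> rel y z \<Longrightarrow> rel x z"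
    and pres: "\<And>x y. x \<in> \<Omega> \<Longrightarrow> y \<in> \<Omega> \<Longrightarrow> rel x y \<Longrightarrow> rel (f x) (f y)"
    and csize: "\<And>x. x \<in> \<Omega> \<Longrightarrow> card {y\<in>\<Omega>. rel x y} = m"
    and m1: "1 < m" and m2: "m < card \<Omega>"
  shows "imprimitive \<Omega> f"
proof -
  define cls where "cls x = {y\<in>\<Omega>. rel x y}" for x
  have eqcls: "cls x = cls y" if "x \<in> \<Omega>" "y \<in> \<Omega>" "rel x y" for x y
    using that sym trans unfolding cls_def by blast
  have part: "partition_on \<Omega> (cls ` \<Omega>)"
  proof (rule partition_onI)
    show "\<Union> (cls ` \<Omega>) = \<Omega>" using refl unfolding cls_def by blast
  next
    fix A B assume A: "A \<in> cls ` \<Omega>" and B: "B \<in> cls ` \<Omega>" and ne: "A \<noteq> B"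
    then obtain x y where x: "x \<in> \<Omega>" "A = cls x" and y: "y \<in> \<Omega>" "B = cls y" by blast
    show "disjnt A B"
    proof (rule ccontr)
      assume "\<not> disjnt A B"
      then obtain z where z: "z \<in> cls x" "z \<in> cls y" using x y unfolding disjnt_def by blast
      then have "cls x = cls z" "cls y = cls z" using eqcls x y unfolding cls_def by auto
      then show False using ne x y by simp
    qed
  next
    show "{} \<notin> cls ` \<Omega>" using refl unfolding cls_def by blast
  qed
  have img: "f ` B \<in> cls ` \<Omega>" if hB: "B \<in> cls ` \<Omega>" for B
  proof -
    obtain x where x: "x \<in> \<Omega>" "B = cls x" using hB by blast
    have fx: "f x \<in> \<Omega>" using into x by blast
    have sub: "f ` cls x \<subseteq> cls (f x)" using pres into x unfolding cls_def by blast
    have "card (f ` cls x) = card (cls x)"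
      by (rule card_image) (rule inj_on_subset[OF inj], auto simp: cls_def)
    also have "\<dots> = card (cls (f x))" using csize x fx unfolding cls_def by simp
    finally have "f ` cls x = cls (f x)"
      using card_subset_eq[OF _ sub] fin unfolding cls_def by auto
    then show ?thesis using x fx by auto
  qed
  show ?thesis unfolding imprimitive_def
    apply (rule exI[of _ "cls ` \<Omega>"], rule exI[of _ m])
    using part img csize m1 m2 unfolding cls_def by auto
qed



lemma kth_props:
  assumes p: "prime p" and r: "r \<in> kth_powers p k"
  shows "r < p" "coprime r p" "\<exists>t. 0 < t \<and> t < p \<and> r = t ^ k mod p"
proof -
  obtain t where t: "r = t ^ k mod p" "t < p" "t \<noteq> 0" using r unfolding kth_powers_def Fp_def by auto
  have p0: "p > 0" using p prime_gt_0_nat by blast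
  show "r < p" using t p0 by simp
  show "\<exists>t. 0 < t \<and> t < p \<and> r = t ^ k mod p" using t by auto
  have "\<not> p dvd t" using t by (auto dest: dvd_imp_le)
  then have "\<not> p dvd t ^ k" using p prime_dvd_power by blast
  then have "coprime p (t ^ k)" using p by (intro prime_imp_coprime)
  then have "coprime (t ^ k) p" by (simp add: coprime_commute)
  then show "coprime r p" using t by simp
qed

lemma wr_at:
  assumes "\<sigma> permutes {..<k}" "i < k"
  shows "wr_action p k h \<sigma> x (\<sigma> i) = aff_apply p (h i) (x i)"
proof -
  have "\<sigma> i < k" using permutes_in_image[OF assms(1)] assms(2) by simp
  moreover have "inv \<sigma> (\<sigma> i) = i" by (rule permutes_inverses(2)[OF assms(1)])
  ultimately show ?thesis unfolding wr_action_def by (simp only: restrict_apply' lessThan_iff)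
qed

lemma wr_all:
  assumes "\<sigma> permutes {..<k}" "j < k"
  shows "\<exists>i<k. j = \<sigma> i"
proof -
  have "inv \<sigma> j < k" using permutes_in_image[OF permutes_inv[OF assms(1)]] assms(2) by simp
  moreover have "\<sigma> (inv \<sigma> j) = j" by (rule permutes_inverses(1)[OF assms(1)])
  ultimately show ?thesis by metis
qed

lemma card_space: "card (space p k) = p ^ k"
  unfolding space_def Fp_def by (simp add: card_PiE)

lemma finite_space: "finite (space p k)"
  unfolding space_def Fp_def by (simp add: finite_PiE)

lemma wr_into:
  assumes p: "prime p"
  shows "wr_action p k h \<sigma> ` space p k \<subseteq> space p k"
proof -
  have p0: "p > 0" using p prime_gt_0_nat by blast
  have "wr_action p k h \<sigma> x \<in> space p k" for x
    unfolding space_def wr_action_def Fp_def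
    by (rule restrict_PiE[THEN iffD2]) (simp add: aff_apply_def p0)
  then show ?thesis by blast
qed

lemma wr_inj:
  assumes p: "prime p" and h: "\<forall>i<k. h i \<in> Ggrp p k" and s: "\<sigma> permutes {..<k}"
  shows "inj_on (wr_action p k h \<sigma>) (space p k)"
proof (rule inj_onI)
  fix x y assume x: "x \<in> space p k" and y: "y \<in> space p k"
    and e: "wr_action p k h \<sigma> x = wr_action p k h \<sigma> y"
  show "x = y"
  proof (rule PiE_ext[OF x[unfolded space_def] y[unfolded space_def]])
    fix i assume i: "i \<in> {..<k}"
    then have i': "i < k" by simp
    obtain r b where hi: "h i = (r, b)" "r \<in> kth_powers p k" using h i' unfolding Ggrp_def by (cases "h i") auto
    have cop: "coprime r p" using kth_props(2)[OF p hi(2)] .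
    have "aff_apply p (h i) (x i) = aff_apply p (h i) (y i)"
      using e wr_at[OF s i', of p h x] wr_at[OF s i', of p h y] by metis
    then have "[r * x i + b = r * y i + b] (mod p)" using hi unfolding aff_apply_def cong_def by simp
    then have "[r * x i = r * y i] (mod p)" by (simp only: cong_add_rcancel_nat)
    then have "[x i = y i] (mod p)" by (simp only: cong_mult_lcancel_nat[OF cop])
    moreover have "x i < p" "y i < p" using x y i unfolding space_def Fp_def by auto
    ultimately show "x i = y i" by (rule cong_less_modulus_unique_nat)
  qed
qed

lemma wr_bij:
  assumes p: "prime p" and h: "\<forall>i<k. h i \<in> Ggrp p k" and s: "\<sigma> permutes {..<k}"
  shows "bij_betw (wr_action p k h \<sigma>) (space p k) (space p k)"
proof -
  have i: "inj_on (wr_action p k h \<sigma>) (space p k)" using wr_inj[OF assms] .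
  have "card (wr_action p k h \<sigma> ` space p k) = card (space p k)" using card_image[OF i] .
  then have "wr_action p k h \<sigma> ` space p k = space p k"
    using card_subset_eq[OF finite_space wr_into[OF p]] by simp
  then show ?thesis using i unfolding bij_betw_def by simp
qed



lemma caseA:
  assumes p: "prime p" and h: "\<forall>i<k. h i \<in> Ggrp p k" and s: "\<sigma> permutes {..<k}"
    and C: "C \<noteq> {}" "C \<subset> {..<k}" "\<sigma> ` C \<subseteq> C"
  shows "imprimitive (space p k) (wr_action p k h \<sigma>)"
proof -
  define rel where "rel x y = (\<forall>j\<in>{..<k}-C. x j = y j)" for x y :: "nat \<Rightarrow> nat"
  have p2: "p \<ge> 2" using p prime_ge_2_nat by blast
  have finC: "finite C" using C(2) finite_subset by blast
  have cC1: "card C \<ge> 1" using C(1) finC by (simp add: Suc_le_eq card_gt_0_iff)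
  have cC2: "card C < k" using psubset_card_mono[OF _ C(2)] by simp
  show ?thesis
  proof (rule imprim_from_rel[where rel=rel and m="p ^ card C"])
    show "finite (space p k)" by (rule finite_space)
    show "inj_on (wr_action p k h \<sigma>) (space p k)" by (rule wr_inj[OF p h s])
    show "wr_action p k h \<sigma> ` space p k \<subseteq> space p k" by (rule wr_into[OF p])
    show "\<And>x. rel x x" unfolding rel_def by simp
    show "\<And>x y. rel x y \<Longrightarrow> rel y x" unfolding rel_def by simp
    show "\<And>x y z. rel x y \<Longrightarrow> rel y z \<Longrightarrow> rel x z" unfolding rel_def by simp
    show "rel (wr_action p k h \<sigma> x) (wr_action p k h \<sigma> y)" if "rel x y" for x y
      unfolding rel_def
    proof
      fix j assume j: "j \<in> {..<k} - C"
      obtain i where i: "i < k" "j = \<sigma> i" using wr_all[OF s] j by auto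
      have "i \<notin> C" using i j C(3) by auto
      then have "x i = y i" using that i unfolding rel_def by auto
      then show "wr_action p k h \<sigma> x j = wr_action p k h \<sigma> y j"
        using i wr_at[OF s i(1)] by simp
    qed
    show "card {y \<in> space p k. rel x y} = p ^ card C" if x: "x \<in> space p k" for x
    proof -
      have "bij_betw (\<lambda>y. restrict y C) {y \<in> space p k. rel x y} (PiE C (\<lambda>_. Fp p))"
      proof (rule bij_betw_byWitness[where f'="\<lambda>z j. if j \<in> C then z j else x j"])
        show "\<forall>a\<in>{y \<in> space p k. rel x y}. (\<lambda>j. if j \<in> C then restrict a C j else x j) = a"
        proof
          fix a assume a: "a \<in> {y \<in> space p k. rel x y}"
          show "(\<lambda>j. if j \<in> C then restrict a C j else x j) = a"
          proof
            fix j
            show "(if j \<in> C then restrict a C j else x j) = a j"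
              using a x C(2) unfolding rel_def space_def by (cases "j < k") (auto simp: PiE_def extensional_def)
          qed
        qed
        show "\<forall>a'\<in>PiE C (\<lambda>_. Fp p). restrict (\<lambda>j. if j \<in> C then a' j else x j) C = a'"
          by (auto simp: PiE_def extensional_def restrict_def)
        show "(\<lambda>y. restrict y C) ` {y \<in> space p k. rel x y} \<subseteq> PiE C (\<lambda>_. Fp p)"
          using C(2) unfolding space_def by auto
        show "(\<lambda>z j. if j \<in> C then z j else x j) ` PiE C (\<lambda>_. Fp p) \<subseteq> {y \<in> space p k. rel x y}"
          using C(2) x unfolding space_def rel_def by (auto simp: PiE_def extensional_def)
      qed
      then have "card {y \<in> space p k. rel x y} = card (PiE C (\<lambda>_. Fp p))" by (rule bij_betw_same_card)
      also have "\<dots> = p ^ card C" using finC by (simp add: card_PiE Fp_def)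
      finally show ?thesis .
    qed
    show "1 < p ^ card C" by (rule one_less_power) (use p2 cC1 in auto)
    show "p ^ card C < card (space p k)" using p2 cC2 by (simp add: card_space power_strict_increasing)
  qed
qed



lemma orbit_full:
  assumes s: "\<sigma> permutes {..<k}" and k: "0 < k"
    and noC: "\<And>C. C \<noteq> {} \<Longrightarrow> C \<subset> {..<k} \<Longrightarrow> \<not> \<sigma> ` C \<subseteq> C"
  shows "bij_betw (\<lambda>j. (\<sigma> ^^ j) 0) {..<k} {..<k} \<and> (\<sigma> ^^ k) 0 = 0"
proof -
  define \<rho> where "\<rho> j = (\<sigma> ^^ j) 0" for j
  have perm: "permutation \<sigma>" using s by (auto simp: permutation_permutes)
  obtain n where n: "n > 0" "(\<sigma> ^^ n) 0 = 0" using permutation_self[OF perm] by blast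
  define n0 where "n0 = (LEAST n. n > 0 \<and> (\<sigma> ^^ n) 0 = 0)"
  have n0: "n0 > 0" "\<rho> n0 = 0"
    using LeastI[of "\<lambda>n. n > 0 \<and> (\<sigma> ^^ n) 0 = 0", OF conjI[OF n]] unfolding n0_def \<rho>_def by auto
  have n0min: "\<not> (\<rho> m = 0)" if "0 < m" "m < n0" for m
    using not_less_Least[of m "\<lambda>n. n > 0 \<and> (\<sigma> ^^ n) 0 = 0"] that unfolding n0_def \<rho>_def by auto
  have rin: "\<rho> j \<in> {..<k}" for j unfolding \<rho>_def
    by (rule permutes_in_funpow_image[OF s]) (use k in simp)
  have rsuc: "\<rho> (Suc j) = \<sigma> (\<rho> j)" for j unfolding \<rho>_def by simp
  have injs: "inj \<sigma>" using permutes_inj[OF s] .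
  define C where "C = \<rho> ` {..<n0}"
  have Csub: "C \<subseteq> {..<k}" using rin unfolding C_def by auto
  have Cne: "C \<noteq> {}" using n0 unfolding C_def by auto
  have Cinv: "\<sigma> ` C \<subseteq> C"
  proof
    fix y assume "y \<in> \<sigma> ` C"
    then obtain j where j: "j < n0" "y = \<sigma> (\<rho> j)" unfolding C_def by auto
    show "y \<in> C"
    proof (cases "Suc j < n0")
      case True then show ?thesis using j rsuc unfolding C_def by (metis image_eqI lessThan_iff)
    next
      case False
      then have "Suc j = n0" using j by simp
      then have "y = \<rho> 0" using j rsuc n0 by (metis funpow_0 \<rho>_def)
      then show ?thesis using n0 unfolding C_def by auto
    qed
  qed
  have Ceq: "C = {..<k}" using noC[OF Cne] Csub Cinv by blast
  have inj: "inj_on \<rho> {..<n0}"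
  proof (rule inj_onI)
    fix a b assume a: "a \<in> {..<n0}" and b: "b \<in> {..<n0}" and e: "\<rho> a = \<rho> b"
    show "a = b"
    proof (rule ccontr)
      assume "a \<noteq> b"
      then consider "a < b" | "b < a" by linarith
      then show False
      proof cases
        case 1
        have "\<rho> b = (\<sigma> ^^ a) (\<rho> (b - a))" unfolding \<rho>_def
          using 1 by (metis funpow_add le_add_diff_inverse less_imp_le comp_apply)
        moreover have "\<rho> a = (\<sigma> ^^ a) 0" unfolding \<rho>_def ..
        ultimately have "\<rho> (b - a) = 0" using e inj_fn[OF injs, of a] by (metis injD)
        moreover have "0 < b - a" "b - a < n0" using 1 b by auto
        ultimately show False using n0min[of "b - a"] by blast
      next
        case 2
        have "\<rho> a = (\<sigma> ^^ b) (\<rho> (a - b))" unfolding \<rho>_def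
          using 2 by (metis funpow_add le_add_diff_inverse less_imp_le comp_apply)
        moreover have "\<rho> b = (\<sigma> ^^ b) 0" unfolding \<rho>_def ..
        ultimately have "\<rho> (a - b) = 0" using e inj_fn[OF injs, of b] by (metis injD)
        moreover have "0 < a - b" "a - b < n0" using 2 a by auto
        ultimately show False using n0min[of "a - b"] by blast
      qed
    qed
  qed
  have "card C = n0" unfolding C_def using card_image[OF inj] by simp
  then have "n0 = k" using Ceq by simp
  then show ?thesis using inj Ceq n0 unfolding bij_betw_def C_def \<rho>_def by auto
qed



lemma eigen:
  assumes p: "prime p" and h: "\<forall>i<k. h i \<in> Ggrp p k" and s: "\<sigma> permutes {..<k}" and k: "0 < k"
    and bij: "bij_betw (\<lambda>j. (\<sigma> ^^ j) 0) {..<k} {..<k}" and rk: "(\<sigma> ^^ k) 0 = 0"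
  shows "\<exists>v::nat\<Rightarrow>int. \<exists>c::int. (\<forall>i<k. int p dvd (int (fst (h i)) * v i - c * v (\<sigma> i))) \<and> \<not> int p dvd v 0"
proof -
  have "\<forall>i. \<exists>t. i < k \<longrightarrow> 0 < t \<and> t < p \<and> fst (h i) = t ^ k mod p"
  proof
    fix i show "\<exists>t. i < k \<longrightarrow> 0 < t \<and> t < p \<and> fst (h i) = t ^ k mod p"
    proof (cases "i < k")
      case True
      then have "fst (h i) \<in> kth_powers p k" using h unfolding Ggrp_def by (auto simp: mem_Times_iff)
      then show ?thesis using kth_props(3)[OF p] by blast
    qed simp
  qed
  then obtain t where t: "\<And>i. i < k \<Longrightarrow> 0 < t i \<and> t i < p \<and> fst (h i) = t i ^ k mod p"
    using choice by metis
  define \<rho> where "\<rho> j = (\<sigma> ^^ j) 0" for j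
  define ind where "ind = inv_into {..<k} \<rho>"
  define r where "r i = int (fst (h i))" for i
  define u where "u j = (\<Prod>i<j. r (\<rho> i))" for j
  define c where "c = (\<Prod>i<k. int (t (\<rho> i)))"
  define v where "v i = u (ind i) * c ^ (k - ind i)" for i
  have bij': "bij_betw \<rho> {..<k} {..<k}" using bij unfolding \<rho>_def .
  have \<rho>_lt: "\<rho> j < k" if "j < k" for j using bij' that unfolding bij_betw_def by auto
  have \<rho>_ind: "\<rho> (ind i) = i" if "i < k" for i
    using bij' that unfolding ind_def by (simp add: bij_betw_inv_into_right)
  have ind_\<rho>: "ind (\<rho> j) = j" if "j < k" for j
    using bij' that unfolding ind_def bij_betw_def by (simp add: inv_into_f_f)
  have ind_lt: "ind i < k" if "i < k" for i
    using bij_betw_inv_into[OF bij'] that unfolding ind_def bij_betw_def by auto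
  have rsuc: "\<rho> (Suc j) = \<sigma> (\<rho> j)" for j unfolding \<rho>_def by simp
  have \<rho>0: "\<rho> 0 = 0" unfolding \<rho>_def by simp
  have pint: "prime (int p)" using p by simp
  have ucong: "[u k = c ^ k] (mod int p)"
  proof -
    have "[u k = (\<Prod>i<k. int (t (\<rho> i)) ^ k)] (mod int p)" unfolding u_def
    proof (rule cong_prod)
      fix i assume i: "i \<in> {..<k}"
      have "r (\<rho> i) = int (t (\<rho> i) ^ k mod p)" using t[OF \<rho>_lt] i unfolding r_def by auto
      also have "\<dots> = int (t (\<rho> i)) ^ k mod int p" by (simp add: of_nat_mod)
      finally show "[r (\<rho> i) = int (t (\<rho> i)) ^ k] (mod int p)" by (simp add: cong_def)
    qed
    then show ?thesis unfolding c_def by (simp add: prod_power_distrib)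
  qed
  have E: "int p dvd (r i * v i - c * v (\<sigma> i))" if i: "i < k" for i
  proof -
    define j where "j = ind i"
    have j: "j < k" "\<rho> j = i" using ind_lt \<rho>_ind i unfolding j_def by auto
    have si: "\<sigma> i = \<rho> (Suc j)" using rsuc j by simp
    have uS: "u (Suc j) = u j * r (\<rho> j)" unfolding u_def by simp
    show ?thesis
    proof (cases "Suc j < k")
      case True
      have "ind (\<sigma> i) = Suc j" using si ind_\<rho>[OF True] by simp
      then have "v (\<sigma> i) = u (Suc j) * c ^ (k - Suc j)" unfolding v_def by simp
      moreover have "v i = u j * c ^ (k - j)" unfolding v_def j_def ..
      moreover have "k - j = Suc (k - Suc j)" using True by simp
      ultimately have "r i * v i - c * v (\<sigma> i) = 0" using uS j by (simp add: algebra_simps)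
      then show ?thesis by simp
    next
      case False
      then have kj: "k = Suc j" using j by simp
      have "\<sigma> i = 0" using si kj rk unfolding \<rho>_def by simp
      moreover have "ind 0 = 0" using ind_\<rho>[OF k] \<rho>0 by simp
      ultimately have "v (\<sigma> i) = c ^ k" unfolding v_def u_def by simp
      moreover have "v i = u j * c" unfolding v_def j_def[symmetric] using kj by simp
      ultimately have "r i * v i - c * v (\<sigma> i) = c * (u k - c ^ k)" using uS j kj by (simp add: algebra_simps)
      moreover have "int p dvd (u k - c ^ k)" using ucong by (simp add: cong_iff_dvd_diff)
      ultimately show ?thesis by simp
    qed
  qed
  have v0: "v 0 = c ^ k" using ind_\<rho>[OF k] \<rho>0 unfolding v_def u_def by simp
  have nd: "\<not> int p dvd v 0"
  proof
    assume "int p dvd v 0"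
    then have "int p dvd c" using v0 prime_dvd_power[OF pint] by metis
    then have "\<exists>i\<in>{..<k}. int p dvd int (t (\<rho> i))"
      unfolding c_def using prime_dvd_prod_iff[OF _ pint, of "{..<k}"] by simp
    then obtain i where i: "i < k" "int p dvd int (t (\<rho> i))" by blast
    then have "p dvd t (\<rho> i)" by simp
    moreover have "0 < t (\<rho> i)" "t (\<rho> i) < p" using t[OF \<rho>_lt[OF i(1)]] by auto
    ultimately show False using dvd_imp_le by fastforce
  qed
  show ?thesis using E nd unfolding r_def by blast
qed



lemma dvd_mod_diff: "(m::int) dvd (z mod m - z)"
proof -
  have "z mod m - z = - (m * (z div m))" using minus_mod_eq_mult_div[of z m] by simp
  then show ?thesis by simp
qed

lemma caseB:
  assumes p: "prime p" and h: "\<forall>i<k. h i \<in> Ggrp p k" and s: "\<sigma> permutes {..<k}" and k2: "2 \<le> k"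
    and E: "\<forall>i<k. int p dvd (int (fst (h i)) * v i - c * v (\<sigma> i))" and nd: "\<not> int p dvd v 0"
  shows "imprimitive (space p k) (wr_action p k h \<sigma>)"
proof -
  define P where "P = int p"
  have P0: "P > 0" using p prime_gt_0_nat unfolding P_def by simp
  have p2: "p \<ge> 2" using p prime_ge_2_nat by blast
  have pint: "prime P" using p unfolding P_def by simp
  define rel where "rel x y = (\<exists>a::int. \<forall>j<k. P dvd (int (y j) - int (x j) - a * v j))" for x y
  show ?thesis
  proof (rule imprim_from_rel[where rel=rel and m=p])
    show "finite (space p k)" by (rule finite_space)
    show "inj_on (wr_action p k h \<sigma>) (space p k)" by (rule wr_inj[OF p h s])
    show "wr_action p k h \<sigma> ` space p k \<subseteq> space p k" by (rule wr_into[OF p])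
    show "rel x x" for x unfolding rel_def by (rule exI[of _ 0]) simp
    show "rel y x" if H: "rel x y" for x y
    proof -
      obtain a where a: "\<forall>j<k. P dvd (int (y j) - int (x j) - a * v j)" using H unfolding rel_def by blast
      have "\<forall>j<k. P dvd (int (x j) - int (y j) - (- a) * v j)"
      proof (intro allI impI)
        fix j assume "j < k"
        then have "P dvd - (int (y j) - int (x j) - a * v j)" using a by (simp only: dvd_minus_iff)
        then show "P dvd (int (x j) - int (y j) - (- a) * v j)" by (simp add: algebra_simps)
      qed
      then show ?thesis unfolding rel_def by blast
    qed
    show "rel x z" if H: "rel x y" "rel y z" for x y z
    proof -
      obtain a where a: "\<forall>j<k. P dvd (int (y j) - int (x j) - a * v j)" using H unfolding rel_def by blast
      obtain b where b: "\<forall>j<k. P dvd (int (z j) - int (y j) - b * v j)" using H unfolding rel_def by blast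
      have "\<forall>j<k. P dvd (int (z j) - int (x j) - (a + b) * v j)"
      proof (intro allI impI)
        fix j assume "j < k"
        then have "P dvd ((int (y j) - int (x j) - a * v j) + (int (z j) - int (y j) - b * v j))"
          using a b by (intro dvd_add) auto
        moreover have "(int (y j) - int (x j) - a * v j) + (int (z j) - int (y j) - b * v j) = int (z j) - int (x j) - (a + b) * v j"
          by (simp add: algebra_simps)
        ultimately show "P dvd (int (z j) - int (x j) - (a + b) * v j)" by simp
      qed
      then show ?thesis unfolding rel_def by blast
    qed
    show "rel (wr_action p k h \<sigma> x) (wr_action p k h \<sigma> y)" if H: "rel x y" for x y
    proof -
      obtain a where a: "\<forall>j<k. P dvd (int (y j) - int (x j) - a * v j)" using H unfolding rel_def by blast
      have "\<forall>j<k. P dvd (int (wr_action p k h \<sigma> y j) - int (wr_action p k h \<sigma> x j) - (a * c) * v j)"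
      proof (intro allI impI)
        fix j assume j: "j < k"
        obtain i where i: "i < k" "j = \<sigma> i" using wr_all[OF s j] by blast
        obtain r b where hb: "h i = (r, b)" by (cases "h i")
        define X where "X = int r * int (x i) + int b"
        define Y where "Y = int r * int (y i) + int b"
        have gx: "int (wr_action p k h \<sigma> x j) = X mod P"
          using wr_at[OF s i(1), of p h x] i hb unfolding aff_apply_def X_def P_def by (simp add: of_nat_mod)
        have gy: "int (wr_action p k h \<sigma> y j) = Y mod P"
          using wr_at[OF s i(1), of p h y] i hb unfolding aff_apply_def Y_def P_def by (simp add: of_nat_mod)
        have e: "Y mod P - X mod P - a * c * v j =
           (Y mod P - Y) - (X mod P - X) + int r * (int (y i) - int (x i) - a * v i)
            + a * (int r * v i - c * v (\<sigma> i))"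
          unfolding X_def Y_def i(2) by (simp add: algebra_simps)
        have d1: "P dvd (int r * v i - c * v (\<sigma> i))" using E i hb unfolding P_def by auto
        have d2: "P dvd (int (y i) - int (x i) - a * v i)" using a i by auto
        have "P dvd (Y mod P - X mod P - a * c * v j)" unfolding e
          by (rule dvd_add[OF dvd_add[OF dvd_diff[OF dvd_mod_diff dvd_mod_diff] dvd_mult[OF d2]] dvd_mult[OF d1]])
        then show "P dvd (int (wr_action p k h \<sigma> y j) - int (wr_action p k h \<sigma> x j) - (a * c) * v j)"
          using gx gy by simp
      qed
      then show ?thesis unfolding rel_def by blast
    qed
    show "card {y \<in> space p k. rel x y} = p" if x: "x \<in> space p k" for x
    proof -
      define \<psi> where "\<psi> a = (\<lambda>j\<in>{..<k}. nat ((int (x j) + int a * v j) mod P))" for a :: nat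
      have \<psi>int: "int (\<psi> a j) = (int (x j) + int a * v j) mod P" if "j < k" for a j
        using that P0 unfolding \<psi>_def by simp
      have inj: "inj_on \<psi> {..<p}"
      proof (rule inj_onI)
        fix a a' assume a: "a \<in> {..<p}" and a': "a' \<in> {..<p}" and e: "\<psi> a = \<psi> a'"
        have "int (\<psi> a 0) = int (\<psi> a' 0)" using e by simp
        then have "(int (x 0) + int a * v 0) mod P = (int (x 0) + int a' * v 0) mod P"
          using \<psi>int[of 0] k2 by simp
        then have "P dvd ((int (x 0) + int a * v 0) - (int (x 0) + int a' * v 0))"
          by (simp add: mod_eq_dvd_iff)
        then have "P dvd ((int a - int a') * v 0)" by (simp add: algebra_simps)
        then have "P dvd (int a - int a')" using nd pint prime_dvd_mult_iff unfolding P_def by blast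
        then have "[int a = int a'] (mod int p)" unfolding P_def by (simp add: cong_iff_dvd_diff)
        then have "[a = a'] (mod p)" by (simp add: cong_int_iff)
        then show "a = a'" using a a' cong_less_modulus_unique_nat by auto
      qed
      have img: "\<psi> ` {..<p} = {y \<in> space p k. rel x y}"
      proof
        show "\<psi> ` {..<p} \<subseteq> {y \<in> space p k. rel x y}"
        proof
          fix y assume "y \<in> \<psi> ` {..<p}"
          then obtain a where a: "y = \<psi> a" by blast
          have "y \<in> space p k" unfolding a space_def \<psi>_def Fp_def
          proof (rule restrict_PiE[THEN iffD2], rule Pi_I)
            fix j
            have l: "(int (x j) + int a * v j) mod P < int p" using P0 unfolding P_def by simp
            have g: "0 \<le> (int (x j) + int a * v j) mod P" using P0 by simp
            show "nat ((int (x j) + int a * v j) mod P) \<in> {..<p}"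
              using nat_less_iff[OF g, of p] l by simp
          qed
          moreover have "rel x y" unfolding rel_def
          proof (rule exI[of _ "int a"], intro allI impI)
            fix j assume "j < k"
            then have "int (y j) - int (x j) - int a * v j
                = (int (x j) + int a * v j) mod P - (int (x j) + int a * v j)" using \<psi>int a by simp
            then show "P dvd (int (y j) - int (x j) - int a * v j)" using dvd_mod_diff by metis
          qed
          ultimately show "y \<in> {y \<in> space p k. rel x y}" by simp
        qed
      next
        show "{y \<in> space p k. rel x y} \<subseteq> \<psi> ` {..<p}"
        proof
          fix y assume y: "y \<in> {y \<in> space p k. rel x y}"
          then obtain a where a: "\<forall>j<k. P dvd (int (y j) - int (x j) - a * v j)" unfolding rel_def by blast
          define a0 where "a0 = nat (a mod P)"
          have a0i: "int a0 = a mod P" unfolding a0_def using P0 by simp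
          have a0p: "a0 < p" using P0 a0i unfolding P_def by (metis of_nat_less_iff pos_mod_bound)
          have "y = \<psi> a0"
          proof
            fix j show "y j = \<psi> a0 j"
            proof (cases "j < k")
              case True
              have yl: "y j < p" using y True unfolding space_def Fp_def by auto
              have "P dvd ((int (y j) - int (x j) - a * v j) + (a - a mod P) * v j)"
              proof (rule dvd_add)
                show "P dvd (int (y j) - int (x j) - a * v j)" using a True by blast
                have "P dvd - (a mod P - a)" using dvd_mod_diff[of P a] by (simp only: dvd_minus_iff)
                then have "P dvd (a - a mod P)" by simp
                then show "P dvd ((a - a mod P) * v j)" by (rule dvd_mult2)
              qed
              then have "P dvd (int (y j) - (int (x j) + int a0 * v j))" using a0i by (simp add: algebra_simps)
              then have "int (y j) mod P = (int (x j) + int a0 * v j) mod P" by (simp add: mod_eq_dvd_iff)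
              moreover have "int (y j) mod P = int (y j)" using yl unfolding P_def by simp
              ultimately have "int (y j) = int (\<psi> a0 j)" using \<psi>int[OF True] by simp
              then show ?thesis by simp
            next
              case False
              then show ?thesis using y unfolding space_def \<psi>_def by (auto simp: PiE_def extensional_def)
            qed
          qed
          then show "y \<in> \<psi> ` {..<p}" using a0p by blast
        qed
      qed
      have "card {y \<in> space p k. rel x y} = card {..<p}" using card_image[OF inj] img by simp
      then show ?thesis by simp
    qed
    show "1 < p" using p2 by simp
    have "p ^ 1 < p ^ k" using p2 k2 by (intro power_strict_increasing) auto
    then show "p < card (space p k)" by (simp add: card_space)
  qed
qed


theorem mainTheorem7:
  fixes p k :: nat and h :: "nat \<Rightarrow> nat \<times> nat" and \<sigma> :: "nat \<Rightarrow> nat"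
  assumes "prime p" and "k \<ge> 2"
    and "\<forall>i<k. h i \<in> Ggrp p k"
    and "\<sigma> permutes {..<k}"
  shows "bij_betw (wr_action p k h \<sigma>) (space p k) (space p k)
         \<and> imprimitive (space p k) (wr_action p k h \<sigma>)"
proof -
  have b: "bij_betw (wr_action p k h \<sigma>) (space p k) (space p k)"
    by (rule wr_bij[OF assms(1,3,4)])
  have "imprimitive (space p k) (wr_action p k h \<sigma>)"
  proof (cases "\<exists>C. C \<noteq> {} \<and> C \<subset> {..<k} \<and> \<sigma> ` C \<subseteq> C")
    case True
    then obtain C where C: "C \<noteq> {}" "C \<subset> {..<k}" "\<sigma> ` C \<subseteq> C" by blast
    show ?thesis by (rule caseA[OF assms(1,3,4) C])
  next
    case False
    have k0: "0 < k" using assms(2) by simp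
    have o: "bij_betw (\<lambda>j. (\<sigma> ^^ j) 0) {..<k} {..<k} \<and> (\<sigma> ^^ k) 0 = 0"
      by (rule orbit_full[OF assms(4) k0]) (use False in blast)
    obtain v c where vc: "\<forall>i<k. int p dvd (int (fst (h i)) * v i - c * v (\<sigma> i))" "\<not> int p dvd v 0"
      using eigen[OF assms(1,3,4) k0 conjunct1[OF o] conjunct2[OF o]] by blast
    show ?thesis by (rule caseB[OF assms(1,3,4,2) vc])
  qed
  with b show ?thesis by blast
qed

end
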